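(* Let $p$ be an intrinsic cross cap of a Whitney metric $d\sigma^2$ on a $2$-manifold, and let $(u,v)$ be a local coordinate system centered at $p$ that is adjusted at $p$, with $d\sigma^2=E\,du^2+2F\,du\,dv+G\,dv^2$ and $\delta:=EG-F^2$. Then at $(u,v)=(0,0)$, $$\delta_{uu}\delta_{vv}-\delta_{uv}^2=4E\Delta,\qquad \Delta:=\det\begin{pmatrix}E&F_u&F_v\\ F_u&G_{uu}/2&G_{uv}/2\\ F_v&G_{uv}/2&G_{vv}/2\end{pmatrix}\Bigg|_{(0,0)}.$$
   Context: For a smooth positive semi-definite metric $d\sigma^2$ with $\langle\cdot,\cdot\rangle=d\sigma^2$: singular points are where it is not positive definite; $\mathcal{N}_p$ is the null space; the Kossowski pseudo-connection is $\Gamma(X,Y,Z)=\tfrac12\bigl(X\langle Y,Z\rangle+Y\langle X,Z\rangle-Z\langle X,Y\rangle+\langle[X,Y],Z\rangle-\langle[X,Z],Y\rangle-\langle[Y,Z],X\rangle\bigr)$; admissible: at each singular point $p$, $\Gamma(V_1,V_2,V_3)(p)=0$ whenever $V_3(p)\in\mathcal{N}_p$. A singular point $p$ of an admissible metric is an intrinsic cross cap if in local coordinates $(u,v)$ centered at $p$, with $\delta=EG-F^2$, $\delta_{uu}\delta_{vv}-\delta_{uv}^2\ne0$ at $p$. A Whitney metric is an admissible metric all of whose singular points are intrinsic cross caps. A coordinate system $(u,v)$ is adjusted at $p$ if $\partial_v\in\mathcal{N}_p$. *)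

theory Defs
  imports "HOL-Analysis.Analysis"
begin

text \<open>We work in a coordinate chart: an open set U of the (u,v)-plane, modelled as real \<times> real.
  Scalar functions are of type real \<times> real \<Rightarrow> real; vector fields are pairs of component
  functions (coefficients of d/du and d/dv).\<close>

type_synonym sfun = "real \<times> real \<Rightarrow> real"
type_synonym vfield = "sfun \<times> sfun"

definition pu :: "sfun \<Rightarrow> sfun" where
  "pu f = (\<lambda>(u,v). deriv (\<lambda>t. f (t, v)) u)"

definition pv :: "sfun \<Rightarrow> sfun" where
  "pv f = (\<lambda>(u,v). deriv (\<lambda>t. f (u, t)) v)"

text \<open>Iterated partial derivatives: True = d/du, False = d/dv.\<close>
fun pd :: "bool list \<Rightarrow> sfun \<Rightarrow> sfun" where
  "pd [] f = f"
| "pd (b # bs) f = (if b then pu else pv) (pd bs f)"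

definition smooth_on :: "(real \<times> real) set \<Rightarrow> sfun \<Rightarrow> bool" where
  "smooth_on U f \<longleftrightarrow> (\<forall>bs. pd bs f differentiable_on U)"

definition smooth_vf :: "(real \<times> real) set \<Rightarrow> vfield \<Rightarrow> bool" where
  "smooth_vf U X \<longleftrightarrow> smooth_on U (fst X) \<and> smooth_on U (snd X)"

definition mform :: "sfun \<Rightarrow> sfun \<Rightarrow> sfun \<Rightarrow> real \<times> real \<Rightarrow> real \<times> real \<Rightarrow> real \<times> real \<Rightarrow> real" where
  "mform E F G q w z = E q * fst w * fst z + F q * (fst w * snd z + snd w * fst z) + G q * snd w * snd z"

definition psd_metric :: "(real \<times> real) set \<Rightarrow> sfun \<Rightarrow> sfun \<Rightarrow> sfun \<Rightarrow> bool" where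
  "psd_metric U E F G \<longleftrightarrow> smooth_on U E \<and> smooth_on U F \<and> smooth_on U G \<and>
     (\<forall>q\<in>U. \<forall>w. mform E F G q w w \<ge> 0)"

definition singular_pt :: "sfun \<Rightarrow> sfun \<Rightarrow> sfun \<Rightarrow> real \<times> real \<Rightarrow> bool" where
  "singular_pt E F G q \<longleftrightarrow> \<not> (\<forall>w. w \<noteq> 0 \<longrightarrow> mform E F G q w w > 0)"

definition null_space :: "sfun \<Rightarrow> sfun \<Rightarrow> sfun \<Rightarrow> real \<times> real \<Rightarrow> (real \<times> real) set" where
  "null_space E F G q = {w. \<forall>z. mform E F G q w z = 0}"

definition ip :: "sfun \<Rightarrow> sfun \<Rightarrow> sfun \<Rightarrow> vfield \<Rightarrow> vfield \<Rightarrow> sfun" where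
  "ip E F G X Y = (\<lambda>q. mform E F G q (fst X q, snd X q) (fst Y q, snd Y q))"

definition vder :: "vfield \<Rightarrow> sfun \<Rightarrow> sfun" where
  "vder X f = (\<lambda>q. fst X q * pu f q + snd X q * pv f q)"

definition lie :: "vfield \<Rightarrow> vfield \<Rightarrow> vfield" where
  "lie X Y = ((\<lambda>q. vder X (fst Y) q - vder Y (fst X) q),
              (\<lambda>q. vder X (snd Y) q - vder Y (snd X) q))"

definition kossowski :: "sfun \<Rightarrow> sfun \<Rightarrow> sfun \<Rightarrow> vfield \<Rightarrow> vfield \<Rightarrow> vfield \<Rightarrow> sfun" where
  "kossowski E F G X Y Z = (\<lambda>q. (1/2) *
     (vder X (ip E F G Y Z) q + vder Y (ip E F G X Z) q - vder Z (ip E F G X Y) q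
      + ip E F G (lie X Y) Z q - ip E F G (lie X Z) Y q - ip E F G (lie Y Z) X q))"

definition admissible :: "(real \<times> real) set \<Rightarrow> sfun \<Rightarrow> sfun \<Rightarrow> sfun \<Rightarrow> bool" where
  "admissible U E F G \<longleftrightarrow> psd_metric U E F G \<and>
     (\<forall>q\<in>U. singular_pt E F G q \<longrightarrow>
        (\<forall>V1 V2 V3. smooth_vf U V1 \<longrightarrow> smooth_vf U V2 \<longrightarrow> smooth_vf U V3 \<longrightarrow>
           (fst V3 q, snd V3 q) \<in> null_space E F G q \<longrightarrow> kossowski E F G V1 V2 V3 q = 0))"

definition delta :: "sfun \<Rightarrow> sfun \<Rightarrow> sfun \<Rightarrow> sfun" where
  "delta E F G = (\<lambda>q. E q * G q - (F q)\<^sup>2)"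

text \<open>Intrinsic cross cap (Hessian determinant of delta nonzero, computed in the chart
  coordinates translated to be centered at q -- translation does not change derivatives).\<close>
definition intrinsic_cross_cap :: "(real \<times> real) set \<Rightarrow> sfun \<Rightarrow> sfun \<Rightarrow> sfun \<Rightarrow> real \<times> real \<Rightarrow> bool" where
  "intrinsic_cross_cap U E F G q \<longleftrightarrow> admissible U E F G \<and> q \<in> U \<and> singular_pt E F G q \<and>
     (let d = delta E F G in pu (pu d) q * pv (pv d) q - (pu (pv d) q)\<^sup>2 \<noteq> 0)"

definition whitney_metric :: "(real \<times> real) set \<Rightarrow> sfun \<Rightarrow> sfun \<Rightarrow> sfun \<Rightarrow> bool" where
  "whitney_metric U E F G \<longleftrightarrow> admissible U E F G \<and>
     (\<forall>q\<in>U. singular_pt E F G q \<longrightarrow> intrinsic_cross_cap U E F G q)"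

definition adjusted_at :: "sfun \<Rightarrow> sfun \<Rightarrow> sfun \<Rightarrow> real \<times> real \<Rightarrow> bool" where
  "adjusted_at E F G q \<longleftrightarrow> (0, 1) \<in> null_space E F G q"

end

theory Submission
  imports Defs
begin

lemma hasu:
  assumes "open U" "f differentiable_on U" "(u,v) \<in> U"
  shows "((\<lambda>t. f (t,v)) has_real_derivative pu f (u,v)) (at u)"
proof -
  have "f differentiable at (u,v)" using assms differentiable_on_eq_differentiable_at by blast
  moreover have "(\<lambda>t::real. (t,v)) differentiable at u" by (auto intro!: derivative_intros)
  ultimately have "(\<lambda>t. f (t,v)) differentiable at u"
    using differentiable_chain_at[of "\<lambda>t::real. (t,v)" u f] by (simp add: o_def)
  then show ?thesis unfolding pu_def by (simp add: DERIV_deriv_iff_real_differentiable)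
qed

lemma hasv:
  assumes "open U" "f differentiable_on U" "(u,v) \<in> U"
  shows "((\<lambda>t. f (u,t)) has_real_derivative pv f (u,v)) (at v)"
proof -
  have "f differentiable at (u,v)" using assms differentiable_on_eq_differentiable_at by blast
  moreover have "(\<lambda>t::real. (u,t)) differentiable at v" by (auto intro!: derivative_intros)
  ultimately have "(\<lambda>t. f (u,t)) differentiable at v"
    using differentiable_chain_at[of "\<lambda>t::real. (u,t)" v f] by (simp add: o_def)
  then show ?thesis unfolding pv_def by (simp add: DERIV_deriv_iff_real_differentiable)
qed

lemma pu_uniq: "((\<lambda>t. f (t,v)) has_real_derivative D) (at u) \<Longrightarrow> pu f (u,v) = D"
  unfolding pu_def by (simp add: DERIV_imp_deriv)
lemma pv_uniq: "((\<lambda>t. f (u,t)) has_real_derivative D) (at v) \<Longrightarrow> pv f (u,v) = D"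
  unfolding pv_def by (simp add: DERIV_imp_deriv)

lemma transu:
  assumes "open U" "(u,v) \<in> U" "\<And>x. x \<in> U \<Longrightarrow> f x = g x"
    "((\<lambda>t. g (t,v)) has_real_derivative D) (at u)"
  shows "((\<lambda>t. f (t,v)) has_real_derivative D) (at u)"
proof -
  have "open {t. (t,v) \<in> U}"
    using open_vimage[OF assms(1), of "\<lambda>t. (t,v)"] continuous_on_Pair[OF continuous_on_id continuous_on_const] continuous_on_Pair[OF continuous_on_const continuous_on_id] by (auto simp: vimage_def)
  then show ?thesis
    using has_field_derivative_transform_within_open[OF assms(4), of "{t. (t,v) \<in> U}"] assms(2,3) by auto
qed

lemma transv:
  assumes "open U" "(u,v) \<in> U" "\<And>x. x \<in> U \<Longrightarrow> f x = g x"
    "((\<lambda>t. g (u,t)) has_real_derivative D) (at v)"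
  shows "((\<lambda>t. f (u,t)) has_real_derivative D) (at v)"
proof -
  have "open {t. (u,t) \<in> U}"
    using open_vimage[OF assms(1), of "\<lambda>t. (u,t)"] continuous_on_Pair[OF continuous_on_id continuous_on_const] continuous_on_Pair[OF continuous_on_const continuous_on_id] by (auto simp: vimage_def)
  then show ?thesis
    using has_field_derivative_transform_within_open[OF assms(4), of "{t. (u,t) \<in> U}"] assms(2,3) by auto
qed


theorem proposition4p4:
  fixes U :: "(real \<times> real) set" and E F G :: "real \<times> real \<Rightarrow> real"
  assumes "open U" and "(0, 0) \<in> U"
    and "whitney_metric U E F G"
    and "intrinsic_cross_cap U E F G (0, 0)"
    and "adjusted_at E F G (0, 0)"
  shows "(let d = delta E F G in
            pu (pu d) (0,0) * pv (pv d) (0,0) - (pu (pv d) (0,0))\<^sup>2)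
         = 4 * E (0,0) *
           det (vector [vector [E (0,0), pu F (0,0), pv F (0,0)],
                        vector [pu F (0,0), pu (pu G) (0,0) / 2, pu (pv G) (0,0) / 2],
                        vector [pv F (0,0), pu (pv G) (0,0) / 2, pv (pv G) (0,0) / 2]] :: real^3^3)"
proof -
  have psd: "psd_metric U E F G" using assms(3) unfolding whitney_metric_def admissible_def by blast
  have sm: "smooth_on U E" "smooth_on U F" "smooth_on U G" using psd unfolding psd_metric_def by auto
  have dE: "E differentiable_on U" "pu E differentiable_on U" "pv E differentiable_on U"
    using spec[OF sm(1)[unfolded smooth_on_def], of "[]"] spec[OF sm(1)[unfolded smooth_on_def], of "[True]"] spec[OF sm(1)[unfolded smooth_on_def], of "[False]"] by simp_all
  have dF: "F differentiable_on U" "pu F differentiable_on U" "pv F differentiable_on U"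
    using spec[OF sm(2)[unfolded smooth_on_def], of "[]"] spec[OF sm(2)[unfolded smooth_on_def], of "[True]"] spec[OF sm(2)[unfolded smooth_on_def], of "[False]"] by simp_all
  have dG: "G differentiable_on U" "pu G differentiable_on U" "pv G differentiable_on U"
    using spec[OF sm(3)[unfolded smooth_on_def], of "[]"] spec[OF sm(3)[unfolded smooth_on_def], of "[True]"] spec[OF sm(3)[unfolded smooth_on_def], of "[False]"] by simp_all
  have Gnn: "G q \<ge> 0" if "q \<in> U" for q
  proof -
    have "mform E F G q (0,1) (0,1) \<ge> 0" using psd that unfolding psd_metric_def by blast
    then show ?thesis by (simp add: mform_def)
  qed
  have nul: "\<forall>z. mform E F G (0,0) (0,1) z = 0" using assms(5) unfolding adjusted_at_def null_space_def by auto
  have F0: "F (0,0) = 0" using nul[rule_format, of "(1,0)"] by (simp add: mform_def)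
  have G0: "G (0,0) = 0" using nul[rule_format, of "(0,1)"] by (simp add: mform_def)
  obtain e where e: "e > 0" "ball (0,0) e \<subseteq> U" using assms(1,2) open_contains_ball by blast
  have Gu0: "pu G (0,0) = 0"
  proof (rule DERIV_local_min[OF hasu[OF assms(1) dG(1) assms(2)] e(1)], intro allI impI)
    fix y :: real assume "\<bar>0 - y\<bar> < e"
    then have "(y,0) \<in> U" using e(2) by (auto simp: dist_Pair_Pair dist_real_def)
    then show "G (0,0) \<le> G (y,0)" using G0 Gnn by auto
  qed
  have Gv0: "pv G (0,0) = 0"
  proof (rule DERIV_local_min[OF hasv[OF assms(1) dG(1) assms(2)] e(1)], intro allI impI)
    fix y :: real assume "\<bar>0 - y\<bar> < e"
    then have "(0,y) \<in> U" using e(2) by (auto simp: dist_Pair_Pair dist_real_def)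
    then show "G (0,0) \<le> G (0,y)" using G0 Gnn by auto
  qed
  define d where "d = delta E F G"
  have pud: "pu d q = pu E q * G q + E q * pu G q - 2 * (F q * pu F q)" if "q \<in> U" for q
  proof -
    obtain u v where q: "q = (u,v)" by fastforce
    note h = hasu[OF assms(1) _ that[unfolded q]]
    have "((\<lambda>t. E (t,v) * G (t,v) - F (t,v) * F (t,v)) has_real_derivative
        E (u,v) * pu G (u,v) + pu E (u,v) * G (u,v) - (F (u,v) * pu F (u,v) + pu F (u,v) * F (u,v))) (at u)"
      by (rule DERIV_diff[OF DERIV_mult'[OF h[OF dE(1)] h[OF dG(1)]] DERIV_mult'[OF h[OF dF(1)] h[OF dF(1)]]])
    moreover have "(\<lambda>t. d (t,v)) = (\<lambda>t. E (t,v) * G (t,v) - F (t,v) * F (t,v))"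
      by (simp add: d_def delta_def power2_eq_square)
    ultimately have "pu d (u,v) = E (u,v) * pu G (u,v) + pu E (u,v) * G (u,v) - (F (u,v) * pu F (u,v) + pu F (u,v) * F (u,v))"
      using pu_uniq by simp
    then show ?thesis unfolding q by (simp add: algebra_simps)
  qed
  have pvd: "pv d q = pv E q * G q + E q * pv G q - 2 * (F q * pv F q)" if "q \<in> U" for q
  proof -
    obtain u v where q: "q = (u,v)" by fastforce
    note h = hasv[OF assms(1) _ that[unfolded q]]
    have "((\<lambda>t. E (u,t) * G (u,t) - F (u,t) * F (u,t)) has_real_derivative
        E (u,v) * pv G (u,v) + pv E (u,v) * G (u,v) - (F (u,v) * pv F (u,v) + pv F (u,v) * F (u,v))) (at v)"
      by (rule DERIV_diff[OF DERIV_mult'[OF h[OF dE(1)] h[OF dG(1)]] DERIV_mult'[OF h[OF dF(1)] h[OF dF(1)]]])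
    moreover have "(\<lambda>t. d (u,t)) = (\<lambda>t. E (u,t) * G (u,t) - F (u,t) * F (u,t))"
      by (simp add: d_def delta_def power2_eq_square)
    ultimately have "pv d (u,v) = E (u,v) * pv G (u,v) + pv E (u,v) * G (u,v) - (F (u,v) * pv F (u,v) + pv F (u,v) * F (u,v))"
      using pv_uniq by simp
    then show ?thesis unfolding q by (simp add: algebra_simps)
  qed
  note hu = hasu[OF assms(1) _ assms(2)] and hv = hasv[OF assms(1) _ assms(2)]
  have duu: "pu (pu d) (0,0) = E (0,0) * pu (pu G) (0,0) - 2 * (pu F (0,0))^2"
  proof -
    have "((\<lambda>t. pu E (t,0) * G (t,0) + E (t,0) * pu G (t,0) - 2 * (F (t,0) * pu F (t,0))) has_real_derivative
       pu E (0,0) * pu G (0,0) + pu (pu E) (0,0) * G (0,0) + (E (0,0) * pu (pu G) (0,0) + pu E (0,0) * pu G (0,0))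
        - 2 * (F (0,0) * pu (pu F) (0,0) + pu F (0,0) * pu F (0,0))) (at 0)"
      by (rule DERIV_diff[OF DERIV_add[OF DERIV_mult'[OF hu[OF dE(2)] hu[OF dG(1)]] DERIV_mult'[OF hu[OF dE(1)] hu[OF dG(2)]]]
                DERIV_cmult[OF DERIV_mult'[OF hu[OF dF(1)] hu[OF dF(2)]]]])
    then have "((\<lambda>t. pu d (t,0)) has_real_derivative
       pu E (0,0) * pu G (0,0) + pu (pu E) (0,0) * G (0,0) + (E (0,0) * pu (pu G) (0,0) + pu E (0,0) * pu G (0,0))
        - 2 * (F (0,0) * pu (pu F) (0,0) + pu F (0,0) * pu F (0,0))) (at 0)"
      by (rule transu[OF assms(1,2) pud, rotated])
    then show ?thesis using pu_uniq F0 G0 Gu0 by (simp add: power2_eq_square)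
  qed
  have dvv: "pv (pv d) (0,0) = E (0,0) * pv (pv G) (0,0) - 2 * (pv F (0,0))^2"
  proof -
    have "((\<lambda>t. pv E (0,t) * G (0,t) + E (0,t) * pv G (0,t) - 2 * (F (0,t) * pv F (0,t))) has_real_derivative
       pv E (0,0) * pv G (0,0) + pv (pv E) (0,0) * G (0,0) + (E (0,0) * pv (pv G) (0,0) + pv E (0,0) * pv G (0,0))
        - 2 * (F (0,0) * pv (pv F) (0,0) + pv F (0,0) * pv F (0,0))) (at 0)"
      by (rule DERIV_diff[OF DERIV_add[OF DERIV_mult'[OF hv[OF dE(3)] hv[OF dG(1)]] DERIV_mult'[OF hv[OF dE(1)] hv[OF dG(3)]]]
                DERIV_cmult[OF DERIV_mult'[OF hv[OF dF(1)] hv[OF dF(3)]]]])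
    then have "((\<lambda>t. pv d (0,t)) has_real_derivative
       pv E (0,0) * pv G (0,0) + pv (pv E) (0,0) * G (0,0) + (E (0,0) * pv (pv G) (0,0) + pv E (0,0) * pv G (0,0))
        - 2 * (F (0,0) * pv (pv F) (0,0) + pv F (0,0) * pv F (0,0))) (at 0)"
      by (rule transv[OF assms(1,2) pvd, rotated])
    then show ?thesis using pv_uniq F0 G0 Gv0 by (simp add: power2_eq_square)
  qed
  have duv: "pu (pv d) (0,0) = E (0,0) * pu (pv G) (0,0) - 2 * pu F (0,0) * pv F (0,0)"
  proof -
    have "((\<lambda>t. pv E (t,0) * G (t,0) + E (t,0) * pv G (t,0) - 2 * (F (t,0) * pv F (t,0))) has_real_derivative
       pv E (0,0) * pu G (0,0) + pu (pv E) (0,0) * G (0,0) + (E (0,0) * pu (pv G) (0,0) + pu E (0,0) * pv G (0,0))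
        - 2 * (F (0,0) * pu (pv F) (0,0) + pu F (0,0) * pv F (0,0))) (at 0)"
      by (rule DERIV_diff[OF DERIV_add[OF DERIV_mult'[OF hu[OF dE(3)] hu[OF dG(1)]] DERIV_mult'[OF hu[OF dE(1)] hu[OF dG(3)]]]
                DERIV_cmult[OF DERIV_mult'[OF hu[OF dF(1)] hu[OF dF(3)]]]])
    then have "((\<lambda>t. pv d (t,0)) has_real_derivative
       pv E (0,0) * pu G (0,0) + pu (pv E) (0,0) * G (0,0) + (E (0,0) * pu (pv G) (0,0) + pu E (0,0) * pv G (0,0))
        - 2 * (F (0,0) * pu (pv F) (0,0) + pu F (0,0) * pv F (0,0))) (at 0)"
      by (rule transu[OF assms(1,2) pvd, rotated])
    then show ?thesis using pu_uniq F0 G0 Gu0 Gv0 by simp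
  qed
  have det: "det (vector [vector [a, b, c], vector [b, p, q], vector [c, q, r]] :: real^3^3)
     = a * p * r + b * q * c + c * b * q - a * q * q - b * b * r - c * p * c" for a b c p q r :: real
    unfolding det_3 by (simp only: vector_3)
  have alg: "(a*p - 2*b^2)*(a*r - 2*c^2) - (a*q - 2*b*c)^2 =
      4*a*(a * (p/2) * (r/2) + b * (q/2) * c + c * b * (q/2) - a * (q/2) * (q/2) - b * b * (r/2) - c * (p/2) * c)"
    for a b c p q r :: real
    by (simp add: field_simps power2_eq_square)
  have "pu (pu d) (0,0) * pv (pv d) (0,0) - (pu (pv d) (0,0))\<^sup>2
         = 4 * E (0,0) *
           det (vector [vector [E (0,0), pu F (0,0), pv F (0,0)],
                        vector [pu F (0,0), pu (pu G) (0,0) / 2, pu (pv G) (0,0) / 2],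
                        vector [pv F (0,0), pu (pv G) (0,0) / 2, pv (pv G) (0,0) / 2]] :: real^3^3)"
    unfolding duu dvv duv det by (rule alg)
  then show ?thesis unfolding d_def Let_def .
qed

end
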